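(* $\mathfrak{s}\leq\mathfrak{s}(\mathbb{R})$.
   Context: For infinite sets $U, A$, say $U$ splits $A$ if both $A\cap U$ and $A\setminus U$ are infinite. $\mathfrak{s}$ is the splitting number: the smallest cardinality of a family $\mathcal{F}$ of subsets of $\mathbb{N}$ such that every infinite subset of $\mathbb{N}$ is split by some member of $\mathcal{F}$. $\mathfrak{s}(\mathbb{R})$ is the smallest cardinality of a family $\mathcal{U}$ of open subsets of $\mathbb{R}$ (usual topology) such that every infinite $A\subseteq\mathbb{R}$ is split by some $U\in\mathcal{U}$. *)

theory Defs
  imports "HOL-Analysis.Analysis"
begin

definition splits :: "'a set \<Rightarrow> 'a set \<Rightarrow> bool" where
  "splits U A \<longleftrightarrow> infinite (A \<inter> U) \<and> infinite (A - U)"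

definition splitting_family_nat :: "nat set set \<Rightarrow> bool" where
  "splitting_family_nat F \<longleftrightarrow> (\<forall>A. infinite A \<longrightarrow> (\<exists>U\<in>F. splits U A))"

definition splitting_family_real :: "real set set \<Rightarrow> bool" where
  "splitting_family_real \<U> \<longleftrightarrow> (\<forall>U\<in>\<U>. open U) \<and>
     (\<forall>A::real set. infinite A \<longrightarrow> (\<exists>U\<in>\<U>. splits U A))"

end

theory Submission
  imports Defs
begin

theorem lemma2p7:
  fixes \<U> :: "real set set"
  assumes "splitting_family_real \<U>"
  shows "\<exists>F. splitting_family_nat F \<and> (card_of F, card_of \<U>) \<in> ordLeq"
proof (intro exI conjI)
  let ?f = "\<lambda>U::real set. (of_nat :: nat \<Rightarrow> real) -` U"
  show "(card_of (?f ` \<U>), card_of \<U>) \<in> ordLeq"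
    using card_of_image by blast
  show "splitting_family_nat (?f ` \<U>)"
    unfolding splitting_family_nat_def
  proof (intro allI impI)
    fix A :: "nat set" assume A: "infinite A"
    have inj: "inj (of_nat :: nat \<Rightarrow> real)" by (simp add: inj_on_def)
    have "infinite ((of_nat :: nat \<Rightarrow> real) ` A)"
      using A inj finite_imageD inj_on_subset by blast
    then obtain U where U: "U \<in> \<U>" "splits U ((of_nat :: nat \<Rightarrow> real) ` A)"
      using assms unfolding splitting_family_real_def by blast
    have e1: "(of_nat :: nat \<Rightarrow> real) ` A \<inter> U = of_nat ` (A \<inter> ?f U)" by auto
    have e2: "(of_nat :: nat \<Rightarrow> real) ` A - U = of_nat ` (A - ?f U)" by auto
    have "splits (?f U) A"
      using U(2) unfolding splits_def e1 e2 by auto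
    then show "\<exists>V\<in>?f ` \<U>. splits V A" using U(1) by blast
  qed
qed

end
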